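(* Let $K_1,K_2$ be infinite compact Hausdorff spaces. Then $C(K_1\times K_2)$ fails the ball fixed point property.
   Context: $C(K)$ is the real Banach space of continuous functions $K\to\mathbb{R}$ with the sup norm. A real Banach space $X$ has the ball fixed point property (BFPP) if every nonexpansive map $T\colon B_X\to B_X$ (i.e. $\|Tx-Ty\|\le\|x-y\|$) has a fixed point, where $B_X$ is the closed unit ball. *)

theory Defs
  imports "HOL-Analysis.Analysis"
begin

definition ball_fixed_point_property :: "'v::real_normed_vector itself \<Rightarrow> bool" where
  "ball_fixed_point_property _ \<longleftrightarrow>
     (\<forall>T :: 'v \<Rightarrow> 'v.
        (\<forall>x \<in> cball 0 1. T x \<in> cball 0 1) \<and>
        (\<forall>x \<in> cball 0 1. \<forall>y \<in> cball 0 1. norm (T x - T y) \<le> norm (x - y))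
        \<longrightarrow> (\<exists>x \<in> cball 0 1. T x = x))"

end

theory Submission imports Defs begin
lemma H: "Hausdorff_space (euclidean :: 'a::t2_space topology)"
  unfolding Hausdorff_space_def by (metis disjnt_def open_openin separation_t2)
lemma CR: assumes "compact (UNIV :: 'a::t2_space set)"
  shows "completely_regular_space (euclidean :: 'a topology)"
proof -
  have "compact_space (euclidean :: 'a topology)" using assms
    by (simp add: compact_space_def)
  then show ?thesis using H normal_imp_completely_regular_space compact_Hausdorff_or_regular_imp_normal_space by blast
qed

lemma key_fun:
  assumes cpt: "compact (UNIV :: 'a::t2_space set)" and inf: "infinite (UNIV :: 'a set)"
  shows "\<exists>w::'a\<Rightarrow>real. continuous_on UNIV w \<and> (\<forall>x. 0 \<le> w x) \<and>
           (\<exists>a. w a = 0 \<and> a \<in> closure {x. 0 < w x})"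
proof -
  obtain a :: 'a where a: "a islimpt UNIV"
    using Heine_Borel_imp_Bolzano_Weierstrass[OF cpt inf] by blast
  have step: "\<exists>W' U y. open W' \<and> a \<in> W' \<and> open U \<and> y \<in> U \<and> U \<inter> W' = {} \<and> W' \<subseteq> W \<and> U \<subseteq> W"
    if WW: "open W" "a \<in> W" for W
  proof -
    obtain y where y: "y \<in> W" "y \<noteq> a" using a WW by (meson islimptE UNIV_I)
    obtain U0 V0 where "open U0" "open V0" "y \<in> U0" "a \<in> V0" "U0 \<inter> V0 = {}"
      using iffD1[OF separation_t2 y(2)] by blast
    then show ?thesis using WW y
      by (intro exI[of _ "V0 \<inter> W"] exI[of _ "U0 \<inter> W"] exI[of _ y]) auto
  qed
  define P where "P = (\<lambda>(n::nat) (t :: 'a set \<times> 'a set \<times> 'a).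
     open (fst t) \<and> a \<in> fst t \<and> open (fst (snd t)) \<and> snd (snd t) \<in> fst (snd t)
      \<and> fst (snd t) \<inter> fst t = {})"
  define Q where "Q = (\<lambda>(n::nat) (t :: 'a set \<times> 'a set \<times> 'a) (t' :: 'a set \<times> 'a set \<times> 'a).
     fst t' \<subseteq> fst t \<and> fst (snd t') \<subseteq> fst t)"
  have "\<exists>f. \<forall>n. P n (f n) \<and> Q n (f n) (f (Suc n))"
  proof (rule dependent_nat_choice)
    show "\<exists>x. P 0 x" using step[of UNIV] unfolding P_def by force
    fix x n assume "P n x"
    then show "\<exists>y. P (Suc n) y \<and> Q n x y"
      using step[of "fst x"] unfolding P_def Q_def by force
  qed
  then obtain f where f: "\<And>n. P n (f n)" "\<And>n. Q n (f n) (f (Suc n))" by blast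
  define W where "W n = fst (f n)" for n
  define U where "U n = fst (snd (f n))" for n
  define y where "y n = snd (snd (f n))" for n
  have W: "open (W n)" "a \<in> W n" and U: "open (U n)" "y n \<in> U n" "U n \<inter> W n = {}"
    and WS: "W (Suc n) \<subseteq> W n" "U (Suc n) \<subseteq> W n" for n
    using f[of n] unfolding P_def Q_def W_def U_def y_def by auto
  have Wmono: "W n \<subseteq> W m" if "m \<le> n" for m n
    using that
  proof (induction n rule: dec_induct)
    case (step k)
    then show ?case using WS(1)[of k] by blast
  qed simp
  have disj: "U m \<inter> U n = {}" if mn: "m < n" for m n
  proof -
    obtain k where k: "n = Suc k" "m \<le> k" using mn by (cases n) auto
    have "U n \<subseteq> W m" using WS(2)[of k] Wmono[OF k(2)] k(1) by blast
    then show ?thesis using U(3)[of m] by blast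
  qed
  have yU: "y m \<in> U n \<longleftrightarrow> m = n" for m n
    using disj[of m n] disj[of n m] U(2)[of m] U(2)[of n] by (metis disjoint_iff nat_neq_iff)
  have inj: "inj y" using yU by (metis injI)
  have CRS: "completely_regular_space (euclidean :: 'a topology)" using CR[OF cpt] .
  have "\<exists>g::'a\<Rightarrow>real. continuous_on UNIV g \<and> (\<forall>x. 0 \<le> g x \<and> g x \<le> 1) \<and> g (y n) = 1
          \<and> (\<forall>x. x \<notin> U n \<longrightarrow> g x = 0)" for n
  proof -
    have "closedin euclidean (- U n)" using U(1) by (simp add: closed_Compl)
    moreover have "y n \<in> topspace euclidean - (- U n)" using U(2) by simp
    ultimately obtain g :: "'a \<Rightarrow> real" where g: "continuous_map euclidean (top_of_set {0..1}) g"
      "g (y n) = 0" "g ` (- U n) \<subseteq> {1}"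
      using CRS unfolding completely_regular_space_def by blast
    have gc: "continuous_on UNIV g" and gr: "\<And>x. g x \<in> {0..1}"
      using g(1) by (auto simp: continuous_map_in_subtopology)
    show ?thesis using g gc gr
      by (intro exI[of _ "\<lambda>x. 1 - g x"]) (auto intro!: continuous_intros)
  qed
  then obtain \<phi> :: "nat \<Rightarrow> 'a \<Rightarrow> real" where
    \<phi>: "\<And>n. continuous_on UNIV (\<phi> n)" "\<And>n x. 0 \<le> \<phi> n x" "\<And>n x. \<phi> n x \<le> 1"
       "\<And>n. \<phi> n (y n) = 1" "\<And>n x. x \<notin> U n \<Longrightarrow> \<phi> n x = 0"
    by metis
  define w where "w x = (\<Sum>n. (1/2)^n * \<phi> n x)" for x
  have summ: "summable (\<lambda>n. (1/2::real)^n * \<phi> n x)" for x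
    by (rule summable_comparison_test[of _ "\<lambda>n. (1/2::real)^n"])
       (use \<phi>(2,3) in \<open>auto intro!: mult_left_le simp: abs_mult\<close>)
  have cont: "continuous_on UNIV w"
  proof (rule uniform_limit_theorem)
    show "\<forall>\<^sub>F n in sequentially. continuous_on UNIV (\<lambda>x. \<Sum>i<n. (1/2::real)^i * \<phi> i x)"
      by (intro always_eventually allI continuous_intros \<phi>(1))
    show "uniform_limit UNIV (\<lambda>n x. \<Sum>i<n. (1/2::real)^i * \<phi> i x) w sequentially"
      unfolding w_def
      by (rule Weierstrass_m_test[of _ _ "\<lambda>n. (1/2)^n"])
         (use \<phi>(2,3) in \<open>auto intro!: mult_left_le simp: abs_mult\<close>)
  qed simp
  have nonneg: "0 \<le> w x" for x
    unfolding w_def by (intro suminf_nonneg summ) (simp add: \<phi>(2))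
  have pos: "0 < w (y n)" for n
  proof -
    have "(\<Sum>i\<in>{n}. (1/2::real)^i * \<phi> i (y n)) \<le> w (y n)"
      unfolding w_def by (rule sum_le_suminf[OF summ]) (auto simp: \<phi>(2))
    then have "(1/2::real)^n \<le> w (y n)" using \<phi>(4)[of n] by simp
    moreover have "0 < (1/2::real)^n" by simp
    ultimately show ?thesis by linarith
  qed
  have infY: "infinite (range y)" using inj finite_imageD infinite_UNIV_nat by blast
  obtain b where b: "b islimpt range y"
    using Heine_Borel_imp_Bolzano_Weierstrass[OF cpt infY] by blast
  have notU: "b \<notin> U n" for n
  proof
    assume bU: "b \<in> U n"
    have "infinite (U n \<inter> range y)" using b U(1)[of n] bU unfolding islimpt_eq_acc_point by blast
    moreover have "U n \<inter> range y \<subseteq> {y n}" using yU by auto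
    ultimately show False using finite_subset by blast
  qed
  have wb: "w b = 0" unfolding w_def using \<phi>(5)[OF notU] by simp
  have "range y \<subseteq> {x. 0 < w x}" using pos by auto
  then have "b \<in> closure {x. 0 < w x}"
    using b islimpt_subset closure_def by (metis UnI2 mem_Collect_eq)
  then show ?thesis using cont nonneg wb by blast
qed

theorem mainTheorem4:
  assumes "compact (UNIV :: 'a::t2_space set)" and "infinite (UNIV :: 'a set)"
    and "compact (UNIV :: 'b::t2_space set)" and "infinite (UNIV :: 'b set)"
  shows "\<not> ball_fixed_point_property TYPE(('a \<times> 'b) \<Rightarrow>\<^sub>C real)"
proof
  assume BF: "ball_fixed_point_property TYPE(('a \<times> 'b) \<Rightarrow>\<^sub>C real)"
  obtain w1 :: "'a \<Rightarrow> real" and a where w1: "continuous_on UNIV w1" "\<And>x. 0 \<le> w1 x"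
    "w1 a = 0" "a \<in> closure {x. 0 < w1 x}"
    using key_fun[OF assms(1,2)] by blast
  obtain w2 :: "'b \<Rightarrow> real" and b where w2: "continuous_on UNIV w2" "\<And>x. 0 \<le> w2 x"
    "w2 b = 0" "b \<in> closure {x. 0 < w2 x}"
    using key_fun[OF assms(3,4)] by blast
  define h where "h p = w1 (fst p) - w2 (snd p)" for p :: "'a \<times> 'b"
  have hc: "continuous_on UNIV h"
  proof -
    have "continuous_on UNIV (\<lambda>p::'a\<times>'b. w1 (fst p))"
      using continuous_on_compose2[OF w1(1) continuous_on_fst[OF continuous_on_id]] by simp
    moreover have "continuous_on UNIV (\<lambda>p::'a\<times>'b. w2 (snd p))"
      using continuous_on_compose2[OF w2(1) continuous_on_snd[OF continuous_on_id]] by simp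
    ultimately show ?thesis unfolding h_def by (intro continuous_intros)
  qed
  define G where "G f p = max (-1) (min 1 (apply_bcontfun f p + h p))"
    for f :: "('a \<times> 'b) \<Rightarrow>\<^sub>C real" and p
  have Gb: "G f \<in> bcontfun" for f
  proof (rule bcontfun_normI)
    show "continuous_on UNIV (G f)" unfolding G_def by (intro continuous_intros hc) simp
    show "norm (G f x) \<le> 1" for x unfolding G_def by auto
  qed
  define T where "T f = Bcontfun (G f)" for f
  have Tapp: "apply_bcontfun (T f) = G f" for f
    unfolding T_def using Gb by (simp add: Bcontfun_inverse)
  have Tball: "T f \<in> cball 0 1" for f
    by (simp, rule norm_bound) (auto simp: Tapp G_def)
  have Tne: "norm (T f - T g) \<le> norm (f - g)" for f g
  proof (rule norm_bound)
    fix p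
    have "norm (apply_bcontfun (T f - T g) p) \<le> \<bar>apply_bcontfun f p - apply_bcontfun g p\<bar>"
      by (simp add: Tapp G_def)
    also have "\<dots> = norm (apply_bcontfun (f - g) p)" by simp
    also have "\<dots> \<le> norm (f - g)" by (rule norm_bounded)
    finally show "norm (apply_bcontfun (T f - T g) p) \<le> norm (f - g)" .
  qed
  obtain f where f: "f \<in> cball 0 1" "T f = f"
    using BF Tball Tne unfolding ball_fixed_point_property_def by blast
  have fb: "\<bar>apply_bcontfun f p\<bar> \<le> 1" for p
    using norm_bounded[of f p] f(1) by simp
  have fx: "G f p = apply_bcontfun f p" for p using f(2) Tapp by metis
  have pos: "apply_bcontfun f p = 1" if "0 < h p" for p
    using fx[of p] fb[of p] that unfolding G_def by (simp add: max_def min_def split: if_splits)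
  have neg: "apply_bcontfun f p = -1" if "h p < 0" for p
    using fx[of p] fb[of p] that unfolding G_def by (simp add: max_def min_def split: if_splits)
  have cl1: "closed {p. apply_bcontfun f p = 1}"
    by (intro closed_Collect_eq continuous_intros) simp
  have cl2: "closed {p. apply_bcontfun f p = -1}"
    by (intro closed_Collect_eq continuous_intros) simp
  have "(a, b) \<in> closure ({x. 0 < w1 x} \<times> {b})" using w1(4) by (simp add: closure_Times)
  moreover have "{x. 0 < w1 x} \<times> {b} \<subseteq> {p. apply_bcontfun f p = 1}"
    using pos w2(3) by (auto simp: h_def)
  ultimately have one: "apply_bcontfun f (a, b) = 1" using cl1 closure_minimal by blast
  have "(a, b) \<in> closure ({a} \<times> {x. 0 < w2 x})" using w2(4) by (simp add: closure_Times)
  moreover have "{a} \<times> {x. 0 < w2 x} \<subseteq> {p. apply_bcontfun f p = -1}"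
    using neg w1(3) by (auto simp: h_def)
  ultimately have "apply_bcontfun f (a, b) = -1" using cl2 closure_minimal by blast
  with one show False by simp
qed

end
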